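(* Let $C=L_1;\ldots;L_d$ be a sorting network on $n$ channels of depth $d\ge2$ whose last layer is in last layer normal form. Suppose that $(i,i+1)\in L_d$, that channel $i+2$ is used in layer $L_{d-1}$ but not in layer $L_d$, and that channels $i$ and $i+1$ are both unused in layer $L_{d-1}$. Then there is a sorting network $C'=L'_1;\ldots;L'_d$ on $n$ channels of depth $d$ whose last layer is in last layer normal form and such that channels $i+1$ and $i+2$ are both used in layers $L'_{d-1}$ and $L'_d$.
   Context: Channels are numbered $1,\ldots,n$. A comparator network of depth $d$ is a sequence $C=L_1;\ldots;L_d$ of layers; each layer is a set of comparators $(i,j)$ with $1\le i<j\le n$, each channel occurring in at most one comparator of a layer. An input $\bar x\in\{0,1\}^n$ propagates: $\bar x_0=\bar x$, and $\bar x_k$ is obtained from $\bar x_{k-1}$ by, for each $(i,j)\in L_k$, putting the minimum of the values at positions $i,j$ at position $i$ and the maximum at position $j$. The output is $C(\bar x)=\bar x_d$; $C$ is a sorting network if $C(\bar x)$ is sorted non-decreasingly for all $\bar x\in\{0,1\}^n$. A channel is used in a layer if it occurs in some comparator of that layer. The last layer $L_d$ is in last layer normal form if every comparator of $L_d$ is of the form $(i,i+1)$ and there is no $i<n$ with both $i$ and $i+1$ unused in $L_d$. *)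

theory Defs
  imports Main
begin

type_synonym comparator = "nat \<times> nat"
type_synonym layer = "comparator set"
type_synonym network = "layer list"

definition is_layer :: "nat \<Rightarrow> layer \<Rightarrow> bool" where
  "is_layer n L \<longleftrightarrow>
     (\<forall>(i,j)\<in>L. 1 \<le> i \<and> i < j \<and> j \<le> n) \<and>
     (\<forall>c\<in>L. \<forall>c'\<in>L. c \<noteq> c' \<longrightarrow>
        {fst c, snd c} \<inter> {fst c', snd c'} = {})"

definition is_network :: "nat \<Rightarrow> network \<Rightarrow> bool" where
  "is_network n C \<longleftrightarrow> (\<forall>L\<in>set C. is_layer n L)"

definition used :: "layer \<Rightarrow> nat \<Rightarrow> bool" where
  "used L k \<longleftrightarrow> (\<exists>(i,j)\<in>L. k = i \<or> k = j)"

(* Inputs are 0/1 vectors, modelled as nat => bool (False = 0, True = 1);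
   only positions 1..n are relevant. *)
definition apply_layer :: "layer \<Rightarrow> (nat \<Rightarrow> bool) \<Rightarrow> (nat \<Rightarrow> bool)" where
  "apply_layer L x = (\<lambda>k.
     if \<exists>j. (k, j) \<in> L then x k \<and> x (THE j. (k, j) \<in> L)
     else if \<exists>i. (i, k) \<in> L then x k \<or> x (THE i. (i, k) \<in> L)
     else x k)"

definition run :: "network \<Rightarrow> (nat \<Rightarrow> bool) \<Rightarrow> (nat \<Rightarrow> bool)" where
  "run C x = fold apply_layer C x"

definition sorted01 :: "nat \<Rightarrow> (nat \<Rightarrow> bool) \<Rightarrow> bool" where
  "sorted01 n y \<longleftrightarrow> (\<forall>i j. 1 \<le> i \<and> i \<le> j \<and> j \<le> n \<longrightarrow> (y i \<longrightarrow> y j))"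

definition sorting_network :: "nat \<Rightarrow> network \<Rightarrow> bool" where
  "sorting_network n C \<longleftrightarrow> is_network n C \<and> (\<forall>x. sorted01 n (run C x))"

definition last_layer_nf :: "nat \<Rightarrow> layer \<Rightarrow> bool" where
  "last_layer_nf n L \<longleftrightarrow>
     (\<forall>(i,j)\<in>L. j = i + 1) \<and>
     \<not> (\<exists>i. 1 \<le> i \<and> i < n \<and> \<not> used L i \<and> \<not> used L (i + 1))"

end

theory Submission
  imports Defs
begin

lemma layer_lo:
  assumes "is_layer n L" "(k,j) \<in> L"
  shows "apply_layer L x k = (x k \<and> x j)"
proof -
  have u: "\<And>j'. (k,j') \<in> L \<Longrightarrow> j' = j"
  proof -
    fix j' assume h: "(k,j') \<in> L"
    show "j' = j"
    proof (rule ccontr)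
      assume "j' \<noteq> j"
      then have "{k,j'} \<inter> {k,j} = {}" using assms h unfolding is_layer_def
        by (metis prod.inject fst_conv snd_conv)
      then show False by auto
    qed
  qed
  have "(THE j'. (k,j') \<in> L) = j" using u assms(2) by blast
  then show ?thesis using assms(2) unfolding apply_layer_def by auto
qed

lemma layer_hi:
  assumes "is_layer n L" "(i,k) \<in> L"
  shows "apply_layer L x k = (x k \<or> x i)"
proof -
  have ik: "i < k" using assms unfolding is_layer_def by auto
  have nl: "\<not> (\<exists>j. (k,j) \<in> L)"
  proof
    assume "\<exists>j. (k,j) \<in> L"
    then obtain j where h: "(k,j) \<in> L" by blast
    have "(k,j) \<noteq> (i,k)" using ik by auto
    then have "{k,j} \<inter> {i,k} = {}" using assms h unfolding is_layer_def
      by (metis fst_conv snd_conv)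
    then show False by auto
  qed
  have u: "\<And>i'. (i',k) \<in> L \<Longrightarrow> i' = i"
  proof -
    fix i' assume h: "(i',k) \<in> L"
    show "i' = i"
    proof (rule ccontr)
      assume "i' \<noteq> i"
      then have "{i',k} \<inter> {i,k} = {}" using assms h unfolding is_layer_def
        by (metis prod.inject fst_conv snd_conv)
      then show False by auto
    qed
  qed
  have "(THE i'. (i',k) \<in> L) = i" using u assms(2) by blast
  then show ?thesis using assms(2) nl unfolding apply_layer_def by auto
qed

lemma layer_none:
  assumes "\<not> used L k"
  shows "apply_layer L x k = x k"
  using assms unfolding apply_layer_def used_def by auto

lemma is_layer_subset: "is_layer n L \<Longrightarrow> L' \<subseteq> L \<Longrightarrow> is_layer n L'"
  unfolding is_layer_def by blast

lemma used_lo: "(a,b) \<in> L \<Longrightarrow> used L a" unfolding used_def by auto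
lemma used_hi: "(a,b) \<in> L \<Longrightarrow> used L b" unfolding used_def by auto

lemma layer_union:
  assumes L: "is_layer n (L1 \<union> L2)" and disj: "\<And>k. used L1 k \<Longrightarrow> \<not> used L2 k"
  shows "apply_layer (L1 \<union> L2) x = apply_layer L2 (apply_layer L1 x)"
proof
  fix k
  have L1: "is_layer n L1" and L2: "is_layer n L2" using L is_layer_subset by blast+
  show "apply_layer (L1 \<union> L2) x k = apply_layer L2 (apply_layer L1 x) k"
  proof (cases "used L1 k")
    case True
    then have nk: "\<not> used L2 k" using disj by blast
    from True obtain a b where ab: "(a,b) \<in> L1" "k = a \<or> k = b" unfolding used_def by auto
    from ab(2) show ?thesis
    proof
      assume "k = a"
      then show ?thesis using ab layer_lo[OF L, of k b] layer_lo[OF L1, of k b] layer_none[OF nk] by auto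
    next
      assume "k = b"
      then show ?thesis using ab layer_hi[OF L, of a k] layer_hi[OF L1, of a k] layer_none[OF nk] by auto
    qed
  next
    case False
    note nk = False
    show ?thesis
    proof (cases "used L2 k")
      case True
      from True obtain a b where ab: "(a,b) \<in> L2" "k = a \<or> k = b" unfolding used_def by auto
      from ab(2) show ?thesis
      proof
        assume "k = a"
        then have "\<not> used L1 b" using ab disj used_hi by blast
        then show ?thesis using \<open>k = a\<close> ab layer_lo[OF L, of k b] layer_lo[OF L2, of k b] layer_none[OF nk]
           layer_none[of L1 b] by auto
      next
        assume "k = b"
        then have "\<not> used L1 a" using ab disj used_lo by blast
        then show ?thesis using \<open>k = b\<close> ab layer_hi[OF L, of a k] layer_hi[OF L2, of a k] layer_none[OF nk]
           layer_none[of L1 a] by auto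
      qed
    next
      case False
      have "\<not> used (L1 \<union> L2) k" using False nk unfolding used_def by auto
      then show ?thesis using False nk layer_none by metis
    qed
  qed
qed

lemma layer_sorted_id:
  assumes "is_layer n E" "sorted01 n z" "1 \<le> k" "k \<le> n"
  shows "apply_layer E z k = z k"
proof (cases "used E k")
  case True
  from True obtain a b where ab: "(a,b) \<in> E" "k = a \<or> k = b" unfolding used_def by auto
  have r: "1 \<le> a" "a < b" "b \<le> n" using ab assms(1) unfolding is_layer_def by auto
  have "z a \<longrightarrow> z b" using assms(2) r unfolding sorted01_def by (meson less_imp_le)
  from ab(2) show ?thesis
  proof
    assume "k = a" then show ?thesis using ab(1) layer_lo[OF assms(1) ab(1)] \<open>z a \<longrightarrow> z b\<close> by auto
  next
    assume "k = b" then show ?thesis using ab(1) layer_hi[OF assms(1) ab(1)] \<open>z a \<longrightarrow> z b\<close> by auto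
  qed
next
  case False
  then show ?thesis using layer_none by metis
qed

lemma is_layer_insert:
  assumes "is_layer n L" "1 \<le> a" "a < b" "b \<le> n" "\<not> used L a" "\<not> used L b"
  shows "is_layer n (insert (a,b) L)"
proof -
  have fr: "\<And>c. c \<in> L \<Longrightarrow> {a,b} \<inter> {fst c, snd c} = {}"
  proof -
    fix c assume "c \<in> L"
    then have "(fst c, snd c) \<in> L" by simp
    then have "used L (fst c)" "used L (snd c)" using used_lo used_hi by blast+
    then show "{a,b} \<inter> {fst c, snd c} = {}" using assms(5,6) by auto
  qed
  have 1: "\<forall>(i,j)\<in>insert (a,b) L. 1 \<le> i \<and> i < j \<and> j \<le> n"
    using assms(1-4) unfolding is_layer_def by auto
  have 2: "\<forall>c\<in>insert (a,b) L. \<forall>c'\<in>insert (a,b) L. c \<noteq> c' \<longrightarrow> {fst c, snd c} \<inter> {fst c', snd c'} = {}"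
  proof (intro ballI impI)
    fix c c' assume c: "c \<in> insert (a,b) L" and c': "c' \<in> insert (a,b) L" and ne: "c \<noteq> c'"
    show "{fst c, snd c} \<inter> {fst c', snd c'} = {}"
    proof (cases "c = (a,b)")
      case True
      then have "c' \<in> L" using c' ne by auto
      then show ?thesis using fr True by auto
    next
      case False
      then have cL: "c \<in> L" using c by auto
      show ?thesis
      proof (cases "c' = (a,b)")
        case True
        then show ?thesis using fr cL by auto
      next
        case False
        then have "c' \<in> L" using c' by auto
        then show ?thesis using cL ne assms(1) unfolding is_layer_def by blast
      qed
    qed
  qed
  show ?thesis using 1 2 unfolding is_layer_def by blast
qed

lemma used_insert: "used (insert c L) k = (k = fst c \<or> k = snd c \<or> used L k)"
  unfolding used_def by (cases c) auto

lemma drop2: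
  assumes "length xs = d" "d \<ge> 2"
  shows "drop (d-2) xs = [xs!(d-2), xs!(d-1)]"
proof -
  obtain m where d: "d = Suc (Suc m)" using assms(2) by (metis add_2_eq_Suc le_Suc_ex)
  have "drop m xs = xs!m # drop (Suc m) xs" using assms d by (simp add: Cons_nth_drop_Suc)
  moreover have "Suc m < length xs" using assms d by simp
  note Cons_nth_drop_Suc[OF this, symmetric]
  ultimately show ?thesis using assms d by simp
qed

theorem lemma8:
  fixes n d i :: nat and C :: network
  assumes "sorting_network n C"
    and "length C = d" and "d \<ge> 2"
    and "last_layer_nf n (C ! (d - 1))"
    and "(i, i + 1) \<in> C ! (d - 1)"
    and "used (C ! (d - 2)) (i + 2)"
    and "\<not> used (C ! (d - 1)) (i + 2)"
    and "\<not> used (C ! (d - 2)) i"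
    and "\<not> used (C ! (d - 2)) (i + 1)"
  shows "\<exists>C'. sorting_network n C' \<and> length C' = d \<and>
           last_layer_nf n (C' ! (d - 1)) \<and>
           used (C' ! (d - 2)) (i + 1) \<and> used (C' ! (d - 2)) (i + 2) \<and>
           used (C' ! (d - 1)) (i + 1) \<and> used (C' ! (d - 1)) (i + 2)"
proof -
  define A where "A = C ! (d-2)"
  define B where "B = C ! (d-1)"
  define P where "P = take (d-2) C"
  have nw: "is_network n C" and srt: "\<And>x. sorted01 n (run C x)"
    using assms(1) unfolding sorting_network_def by auto
  have dlt: "d - 2 < length C" "d - 1 < length C" using assms(2,3) by auto
  have LA: "is_layer n A" using nw nth_mem[OF dlt(1)] unfolding A_def is_network_def by auto
  have LB: "is_layer n B" using nw nth_mem[OF dlt(2)] unfolding B_def is_network_def by auto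
  have Ceq: "C = P @ [A, B]" unfolding P_def A_def B_def
    using drop2[OF assms(2,3)] append_take_drop_id[of "d-2" C] by simp
  have iB: "(i, i+1) \<in> B" using assms(5) B_def by simp
  have i1: "1 \<le> i" using LB iB unfolding is_layer_def by auto
  have nB2: "\<not> used B (i+2)" using assms(7) B_def by simp
  have nA0: "\<not> used A i" "\<not> used A (i+1)" using assms(8,9) A_def by auto
  have uA2: "used A (i+2)" using assms(6) A_def by simp
  then obtain x y where xy: "(x,y) \<in> A" "i+2 = x \<or> i+2 = y" unfolding used_def by auto
  have i2n: "i + 2 \<le> n" using LA xy unfolding is_layer_def by auto
  have nfB: "\<forall>(a,b)\<in>B. b = a + 1" "\<not> (\<exists>j. 1 \<le> j \<and> j < n \<and> \<not> used B j \<and> \<not> used B (j + 1))"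
    using assms(4) B_def unfolding last_layer_nf_def by auto
  define B0 where "B0 = B - {(i,i+1)}"
  define c where "c = (2 \<le> i \<and> \<not> used B (i-1))"
  define E where "E = insert (i+1,i+2) (if c then {(i-1,i)} else {})"
  define A' where "A' = insert (i,i+1) A"
  define B' where "B' = B0 \<union> E"
  have uu: "\<And>X Y k. used (X \<union> Y) k = (used X k \<or> used Y k)" unfolding used_def by auto
  have LB0: "is_layer n B0" using LB is_layer_subset B0_def by blast
  have B0i: "\<not> used B0 k" if "k = i \<or> k = i+1" for k
  proof
    assume "used B0 k"
    then obtain a b where ab: "(a,b) \<in> B0" "k = a \<or> k = b" unfolding used_def by auto
    then have "(a,b) \<in> B" "(a,b) \<noteq> (i,i+1)" using B0_def by auto
    then have "{a,b} \<inter> {i,i+1} = {}" using LB iB unfolding is_layer_def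
      by (metis fst_conv snd_conv)
    then show False using ab that by auto
  qed
  have B0sub: "used B0 k \<Longrightarrow> used B k" for k unfolding B0_def used_def by auto
  have B0k: "used B k \<Longrightarrow> k \<noteq> i \<Longrightarrow> k \<noteq> i+1 \<Longrightarrow> used B0 k" for k
  proof -
    assume "used B k" "k \<noteq> i" "k \<noteq> i+1"
    then obtain a b where ab: "(a,b) \<in> B" "k = a \<or> k = b" unfolding used_def by auto
    then have "(a,b) \<noteq> (i,i+1)" using \<open>k \<noteq> i\<close> \<open>k \<noteq> i+1\<close> by auto
    then have "(a,b) \<in> B0" using ab B0_def by auto
    then show "used B0 k" using ab used_lo used_hi by blast
  qed
  have LB1: "is_layer n (insert (i+1,i+2) B0)"
    using is_layer_insert[OF LB0, of "i+1" "i+2"] i1 i2n B0i nB2 B0sub by auto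
  have LB': "is_layer n B'"
  proof (cases c)
    case True
    then have "B' = insert (i-1,i) (insert (i+1,i+2) B0)" unfolding B'_def E_def by auto
    moreover have "\<not> used B0 (i-1)" using True B0sub c_def by auto
    moreover have "1 \<le> i - 1" "i - 1 < i" "i \<le> n" "i - 1 \<noteq> i + 1" "i - 1 \<noteq> i + 2"
      using True c_def i2n by auto
    ultimately show ?thesis using is_layer_insert[OF LB1, of "i-1" i] B0i
      by (simp add: used_insert)
  next
    case False
    then have "B' = insert (i+1,i+2) B0" unfolding B'_def E_def by auto
    then show ?thesis using LB1 by simp
  qed
  have LA': "is_layer n A'" unfolding A'_def
    using is_layer_insert[OF LA, of i "i+1"] i1 i2n nA0 by auto
  have LE: "is_layer n E" using LB' is_layer_subset B'_def by blast
  have usedE: "used E k \<Longrightarrow> k = i+1 \<or> k = i+2 \<or> (c \<and> (k = i-1 \<or> k = i))" for k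
    unfolding E_def used_def by (auto split: if_splits)
  have r1: "apply_layer A' y = apply_layer {(i,i+1)} (apply_layer A y)" for y
  proof -
    have "A' = A \<union> {(i,i+1)}" unfolding A'_def by auto
    moreover have "used {(i,i+1)} k \<Longrightarrow> \<not> used A k" for k using nA0 unfolding used_def by auto
    ultimately show ?thesis using layer_union[of n A "{(i,i+1)}"] LA' by metis
  qed
  have r2: "apply_layer B z = apply_layer B0 (apply_layer {(i,i+1)} z)" for z
  proof -
    have "B = {(i,i+1)} \<union> B0" unfolding B0_def using iB by auto
    moreover have "used {(i,i+1)} k \<Longrightarrow> \<not> used B0 k" for k using B0i unfolding used_def by auto
    ultimately show ?thesis using layer_union[of n "{(i,i+1)}" B0] LB by metis
  qed
  have r3: "apply_layer B' w = apply_layer E (apply_layer B0 w)" for w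
  proof -
    have "used B0 k \<Longrightarrow> \<not> used E k" for k
    proof
      assume "used B0 k" "used E k"
      then show False using usedE[of k] B0i B0sub nB2 c_def by auto
    qed
    then show ?thesis using layer_union[of n B0 E] LB' B'_def by metis
  qed
  define C' where "C' = P @ [A', B']"
  have runC': "run C' x = apply_layer E (run C x)" for x
    unfolding C'_def Ceq run_def using r1 r2 r3 by simp
  have lenP: "length P = d - 2" unfolding P_def using assms(2,3) by simp
  have len: "length C' = d" unfolding C'_def using lenP assms(3) by simp
  have i1': "C' ! (d-2) = A'" "C' ! (d-1) = B'" unfolding C'_def using lenP assms(3)
    by (auto simp: nth_append)
  have "is_network n C'" unfolding C'_def is_network_def
  proof
    fix L assume "L \<in> set (P @ [A', B'])"
    moreover have "\<forall>L\<in>set P. is_layer n L" using nw P_def unfolding is_network_def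
      by (metis in_set_takeD)
    ultimately show "is_layer n L" using LA' LB' by auto
  qed
  moreover have "sorted01 n (run C' x)" for x
  proof -
    have "\<And>k. 1 \<le> k \<Longrightarrow> k \<le> n \<Longrightarrow> run C' x k = run C x k"
      using runC' layer_sorted_id[OF LE srt] by simp
    then show ?thesis using srt[of x] unfolding sorted01_def by (metis le_trans)
  qed
  ultimately have sn: "sorting_network n C'" unfolding sorting_network_def by auto
  have usedB': "used B' k = (used B0 k \<or> used E k)" for k unfolding B'_def using uu by simp
  have uE: "used E (i+1)" "used E (i+2)" unfolding E_def used_def by auto
  have nf: "last_layer_nf n B'"
    unfolding last_layer_nf_def
  proof
    show "\<forall>(a,b)\<in>B'. b = a + 1" using nfB(1) i1 unfolding B'_def B0_def E_def by auto
    show "\<not> (\<exists>j. 1 \<le> j \<and> j < n \<and> \<not> used B' j \<and> \<not> used B' (j + 1))"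
    proof
      assume "\<exists>j. 1 \<le> j \<and> j < n \<and> \<not> used B' j \<and> \<not> used B' (j + 1)"
      then obtain j where j: "1 \<le> j" "j < n" "\<not> used B' j" "\<not> used B' (j + 1)" by blast
      have "j \<noteq> i" "j \<noteq> i+1" "j+1 \<noteq> i+1" using j usedB' uE by auto
      show False
      proof (cases "j + 1 = i")
        case True
        show False
        proof (cases c)
          case True
          then have "used E i" unfolding E_def used_def by auto
          then show False using j usedB' \<open>j+1 = i\<close> by auto
        next
          case False
          then have "used B j" using \<open>j+1 = i\<close> j c_def by auto
          then have "used B0 j" using B0k \<open>j+1 = i\<close> by auto
          then show False using j usedB' by auto
        qed
      next
        case False
        have "used B j \<or> used B (j+1)" using nfB(2) j by auto
        then show False using B0k j usedB' False \<open>j \<noteq> i\<close> \<open>j \<noteq> i+1\<close> \<open>j+1 \<noteq> i+1\<close> by auto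
      qed
    qed
  qed
  have "used A' (i+1)" "used A' (i+2)" unfolding A'_def using uA2 by (auto simp: used_insert)
  moreover have "used B' (i+1)" "used B' (i+2)" using usedB' uE by auto
  ultimately show ?thesis using sn len nf i1' by metis
qed

end
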